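(* Let $\mathcal{E}$ be a metric space, $\lambda,\kappa,\mu\colon\mathcal{E}\to[0,\infty)$ continuous, $t\ge0$, $J$ an $\mathcal{E}$-valued càdlàg process, $J_n=J$ for all $n$, and let $I(a)=\inf_{\gamma\in\mathcal{R}(t)}\ell(\gamma;a)$ for $a\in\mathbb{R}$. Then $I(a)=0$ if and only if $a\in\mathcal{R}(t)$. If $I(a)>0$ for some $a\in\mathbb{R}$, then exactly one of the following holds: (1) $a<c_-:=\inf\mathcal{R}(t)$ and $I(b)=\ell(c_-;b)$ for all $b\in(-\infty,c_-]$; (2) $a>c_+:=\sup\mathcal{R}(t)$ and $I(b)=\ell(c_+;b)$ for all $b\in[c_+,\infty)$; (3) neither of the previous cases holds and $I(b)=\min\{\ell(c_-;b),\ell(c_+;b)\}$ for all $b\in[c_-,c_+]$, where $c_-=\sup(\mathcal{R}(t)\cap(-\infty,a))$ and $c_+=\inf(\mathcal{R}(t)\cap(a,\infty))$.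
   Context: $\phi_t(f)=\int_0^t\lambda(f(s))\exp(-\kappa(f(s))\int_s^t\mu(f(r))\,dr)\,ds$. $\mathcal{R}(t)$ (attainable parameters) is the set of $\gamma\in[0,\infty)$ such that for every $\epsilon>0$ there is $N_\epsilon$ with $\mathbb{P}(\phi_t(J_n)\in(\gamma-\epsilon,\gamma+\epsilon))>0$ for all $n\ge N_\epsilon$; it is a non-empty closed subset of $[0,\infty)$. For $\gamma\ge0$: $\ell(\gamma;a)=\infty$ for $a<0$, $\ell(\gamma;0)=\gamma$, $\ell(\gamma;a)=\gamma-a+a\log(a/\gamma)$ for $a>0$ (equal to $\infty$ if $\gamma=0$). *)

theory Defs
  imports "HOL-Probability.Probability"
begin

definition cadlag :: "(real \<Rightarrow> 'e::metric_space) \<Rightarrow> bool" where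
  "cadlag f \<longleftrightarrow> (\<forall>s\<ge>0. continuous (at_right s) f) \<and>
                   (\<forall>s>0. \<exists>l. (f \<longlongrightarrow> l) (at_left s))"

definition cadlag_process :: "'w measure \<Rightarrow> ('w \<Rightarrow> real \<Rightarrow> 'e::metric_space) \<Rightarrow> bool" where
  "cadlag_process M J \<longleftrightarrow> (\<forall>s\<ge>0. (\<lambda>\<omega>. J \<omega> s) \<in> borel_measurable M) \<and>
                          (\<forall>\<omega>\<in>space M. cadlag (J \<omega>))"

definition phi :: "('e \<Rightarrow> real) \<Rightarrow> ('e \<Rightarrow> real) \<Rightarrow> ('e \<Rightarrow> real) \<Rightarrow> real \<Rightarrow> (real \<Rightarrow> 'e) \<Rightarrow> real" where
  "phi lam kap mu t f =
     integral {0..t} (\<lambda>s. lam (f s) * exp (- kap (f s) * integral {s..t} (\<lambda>r. mu (f r))))"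

definition attainable ::
  "'w measure \<Rightarrow> ('e \<Rightarrow> real) \<Rightarrow> ('e \<Rightarrow> real) \<Rightarrow> ('e \<Rightarrow> real) \<Rightarrow> real \<Rightarrow>
   (nat \<Rightarrow> 'w \<Rightarrow> real \<Rightarrow> 'e) \<Rightarrow> real set" where
  "attainable M lam kap mu t Js =
     {\<gamma>. \<gamma> \<ge> 0 \<and> (\<forall>\<epsilon>>0. \<exists>N. \<forall>n\<ge>N.
        measure M {\<omega> \<in> space M. phi lam kap mu t (Js n \<omega>) \<in> {\<gamma> - \<epsilon> <..< \<gamma> + \<epsilon>}} > 0)}"

definition ell :: "real \<Rightarrow> real \<Rightarrow> ereal" where
  "ell \<gamma> a = (if a < 0 then \<infinity>
              else if a = 0 then ereal \<gamma>
              else if \<gamma> = 0 then \<infinity>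
              else ereal (\<gamma> - a + a * ln (a / \<gamma>)))"

definition rate :: "real set \<Rightarrow> real \<Rightarrow> ereal" where
  "rate R a = (INF \<gamma>\<in>R. ell \<gamma> a)"

end

theory Submission
  imports Defs
begin


lemma ln_strict: "0 < (x::real) \<Longrightarrow> x \<noteq> 1 \<Longrightarrow> ln x < x - 1"
proof -
  assume x: "0 < x" "x \<noteq> 1"
  have s: "0 < sqrt x" using x by simp
  have s1: "sqrt x \<noteq> 1" using x by auto
  have "ln x = 2 * ln (sqrt x)" using x by (simp add: ln_sqrt)
  also have "\<dots> \<le> 2 * (sqrt x - 1)" using ln_le_minus_one[OF s] by simp
  also have "\<dots> < x - 1"
  proof -
    have "0 < (sqrt x - 1)^2" using s1 by simp
    also have "(sqrt x - 1)^2 = x - 2 * sqrt x + 1" using x by (simp add: power2_eq_square algebra_simps)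
    finally show ?thesis by simp
  qed
  finally show ?thesis .
qed

definition gfun :: "real \<Rightarrow> real \<Rightarrow> real" where "gfun \<gamma> a = \<gamma> - a + a * ln (a / \<gamma>)"

lemma g_alt: "0 < \<gamma> \<Longrightarrow> 0 < a \<Longrightarrow> gfun \<gamma> a = (\<gamma> - a) - a * ln (\<gamma> / a)"
  unfolding gfun_def by (simp add: ln_div algebra_simps)

lemma g_nonneg: "0 < \<gamma> \<Longrightarrow> 0 < a \<Longrightarrow> 0 \<le> gfun \<gamma> a"
proof -
  assume p: "0 < \<gamma>" "0 < a"
  have "a * ln (\<gamma>/a) \<le> a * (\<gamma>/a - 1)" using ln_le_minus_one[of "\<gamma>/a"] p by (intro mult_left_mono) auto
  also have "\<dots> = \<gamma> - a" using p by (simp add: field_simps)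
  finally show ?thesis using g_alt[OF p] by simp
qed

lemma g_pos: "0 < \<gamma> \<Longrightarrow> 0 < a \<Longrightarrow> \<gamma> \<noteq> a \<Longrightarrow> 0 < gfun \<gamma> a"
proof -
  assume p: "0 < \<gamma>" "0 < a" "\<gamma> \<noteq> a"
  have "\<gamma>/a \<noteq> 1" using p by simp
  then have "a * ln (\<gamma>/a) < a * (\<gamma>/a - 1)" using ln_strict[of "\<gamma>/a"] p by (intro mult_strict_left_mono) auto
  also have "\<dots> = \<gamma> - a" using p by (simp add: field_simps)
  finally show ?thesis using g_alt[OF p(1,2)] by simp
qed

lemma g_mono_low: "0 < g1 \<Longrightarrow> g1 \<le> g2 \<Longrightarrow> g2 \<le> a \<Longrightarrow> gfun g2 a \<le> gfun g1 a"
proof -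
  assume p: "0 < g1" "g1 \<le> g2" "g2 \<le> a"
  have g2: "0 < g2" "0 < a" using p by auto
  have "ln (g1/g2) \<le> g1/g2 - 1" using ln_le_minus_one[of "g1/g2"] p g2 by auto
  then have "g2 * ln (g1/g2) \<le> g2 * (g1/g2 - 1)" using g2 by (intro mult_left_mono) auto
  moreover have "g2 * (g1/g2 - 1) = g1 - g2" using g2 by (simp add: right_diff_distrib)
  ultimately have "g2 * ln (g1/g2) \<le> g1 - g2" by simp
  moreover have "ln (g1/g2) \<le> 0" using p g2 by (simp add: divide_le_eq_1)
  then have "a * ln (g1/g2) \<le> g2 * ln (g1/g2)" using p by (intro mult_right_mono_neg) auto
  ultimately have "a * ln (g1/g2) \<le> g1 - g2" by linarith
  moreover have "ln (g1/g2) = ln g1 - ln g2" using p g2 by (simp add: ln_div)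
  moreover have "gfun g1 a = g1 - a + a * (ln a - ln g1)" "gfun g2 a = g2 - a + a * (ln a - ln g2)"
    using p g2 by (simp_all add: gfun_def ln_div)
  ultimately show ?thesis by (simp add: algebra_simps)
qed

lemma g_mono_high: "0 < a \<Longrightarrow> a \<le> g1 \<Longrightarrow> g1 \<le> g2 \<Longrightarrow> gfun g1 a \<le> gfun g2 a"
proof -
  assume p: "0 < a" "a \<le> g1" "g1 \<le> g2"
  have g2: "0 < g1" "0 < g2" using p by auto
  have "ln (g2/g1) \<le> g2/g1 - 1" using ln_le_minus_one[of "g2/g1"] g2 by auto
  then have "g1 * ln (g2/g1) \<le> g1 * (g2/g1 - 1)" using g2 by (intro mult_left_mono) auto
  moreover have "g1 * (g2/g1 - 1) = g2 - g1" using g2 by (simp add: right_diff_distrib)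
  ultimately have "g1 * ln (g2/g1) \<le> g2 - g1" by simp
  moreover have "0 \<le> ln (g2/g1)" using p g2 by simp
  then have "a * ln (g2/g1) \<le> g1 * ln (g2/g1)" using p by (intro mult_right_mono) auto
  ultimately have "a * ln (g2/g1) \<le> g2 - g1" by linarith
  moreover have "ln (g2/g1) = ln g2 - ln g1" using g2 by (simp add: ln_div)
  moreover have "gfun g1 a = g1 - a + a * (ln a - ln g1)" "gfun g2 a = g2 - a + a * (ln a - ln g2)"
    using p g2 by (simp_all add: gfun_def ln_div)
  ultimately show ?thesis by (simp add: algebra_simps)
qed

lemma ell_pos_eq: "0 < \<gamma> \<Longrightarrow> 0 < a \<Longrightarrow> ell \<gamma> a = ereal (gfun \<gamma> a)"
  by (simp add: ell_def gfun_def)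

lemma ell_nonneg: "0 \<le> \<gamma> \<Longrightarrow> 0 \<le> ell \<gamma> a"
  using g_nonneg[of \<gamma> a] by (auto simp: ell_def gfun_def)

lemma ell_self: "0 \<le> a \<Longrightarrow> ell a a = 0"
  by (auto simp: ell_def)

lemma ell_pos: "0 \<le> \<gamma> \<Longrightarrow> 0 \<le> a \<Longrightarrow> \<gamma> \<noteq> a \<Longrightarrow> 0 < ell \<gamma> a"
  using g_pos[of \<gamma> a] by (auto simp: ell_def gfun_def)

lemma ell_neg: "a < 0 \<Longrightarrow> ell \<gamma> a = \<infinity>"
  by (simp add: ell_def)

lemma ell_mono_low: "0 \<le> g1 \<Longrightarrow> g1 \<le> g2 \<Longrightarrow> g2 \<le> a \<Longrightarrow> ell g2 a \<le> ell g1 a"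
proof -
  assume p: "0 \<le> g1" "g1 \<le> g2" "g2 \<le> a"
  show ?thesis
  proof (cases "a = 0")
    case True then show ?thesis using p by (simp add: ell_def)
  next
    case False
    then have a: "0 < a" using p by auto
    show ?thesis
    proof (cases "g1 = 0")
      case True then show ?thesis using a by (simp add: ell_def)
    next
      case False
      then have "0 < g1" using p by auto
      then show ?thesis using g_mono_low[of g1 g2 a] p a by (simp add: ell_pos_eq)
    qed
  qed
qed

lemma ell_mono_high: "0 \<le> a \<Longrightarrow> a \<le> g1 \<Longrightarrow> g1 \<le> g2 \<Longrightarrow> ell g1 a \<le> ell g2 a"
proof -
  assume p: "0 \<le> a" "a \<le> g1" "g1 \<le> g2"
  show ?thesis
  proof (cases "a = 0")
    case True then show ?thesis using p by (simp add: ell_def)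
  next
    case False
    then have a: "0 < a" using p by auto
    then show ?thesis using g_mono_high[of a g1 g2] p by (simp add: ell_pos_eq)
  qed
qed


lemma rate_attained: "c \<in> R \<Longrightarrow> (\<And>\<gamma>. \<gamma> \<in> R \<Longrightarrow> ell c b \<le> ell \<gamma> b) \<Longrightarrow> rate R b = ell c b"
  unfolding rate_def by (rule antisym) (auto intro: INF_lower INF_greatest)

lemma rate_attained2: "c \<in> R \<Longrightarrow> d \<in> R \<Longrightarrow> (\<And>\<gamma>. \<gamma> \<in> R \<Longrightarrow> min (ell c b) (ell d b) \<le> ell \<gamma> b)
  \<Longrightarrow> rate R b = min (ell c b) (ell d b)"
  unfolding rate_def
  apply (rule antisym)
   apply (simp add: INF_lower)
  apply (auto intro: INF_greatest INF_lower)
  done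

lemma rate_lower: "(\<And>\<gamma>. \<gamma> \<in> R \<Longrightarrow> e \<le> ell \<gamma> b) \<Longrightarrow> e \<le> rate R b"
  unfolding rate_def by (auto intro: INF_greatest)

lemma rate_zero_iff:
  fixes R :: "real set"
  assumes ne: "R \<noteq> {}" and cl: "closed R" and pos: "R \<subseteq> {0..}"
  shows "rate R a = 0 \<longleftrightarrow> a \<in> R"
proof
  assume aR: "a \<in> R"
  have "rate R a = ell a a"
    using aR pos by (intro rate_attained) (auto simp: ell_self subset_iff intro!: ell_nonneg)
  then show "rate R a = 0" using aR pos by (auto simp: ell_self)
next
  assume r0: "rate R a = 0"
  show "a \<in> R"
  proof (rule ccontr)
    assume aR: "a \<notin> R"
    have bb: "bdd_below R" using pos by (auto simp: bdd_below_def)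
    have "\<exists>e>0. \<forall>\<gamma>\<in>R. e \<le> ell \<gamma> a"
    proof (cases "a < 0")
      case True then show ?thesis by (intro exI[of _ 1]) (auto simp: ell_neg)
    next
      case False
      show ?thesis
      proof (cases "a = 0")
        case True
        have IR: "Inf R \<in> R" using closed_contains_Inf[OF ne bb cl] .
        then have "0 < Inf R" using aR True pos by (metis atLeast_iff less_eq_real_def subsetD)
        then show ?thesis using True
          by (intro exI[of _ "ereal (Inf R)"]) (auto simp: ell_def intro: cInf_lower[OF _ bb])
      next
        case False
        then have a: "0 < a" using \<open>\<not> a < 0\<close> by auto
        have "open (- R)" using cl by auto
        then obtain \<delta> where d: "\<delta> > 0" "ball a \<delta> \<subseteq> - R" using aR by (auto simp: open_contains_ball)
        define d where "d = min (\<delta>/2) (a/2)"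
        have d0: "0 < d" "d < \<delta>" "d < a" using d a by (auto simp: d_def)
        define e where "e = min (ell (a - d) a) (ell (a + d) a)"
        have "0 < ell (a - d) a" "0 < ell (a + d) a" using d0 a by (auto intro!: ell_pos)
        then have e0: "0 < e" by (simp add: e_def)
        have "e \<le> ell \<gamma> a" if gfun: "\<gamma> \<in> R" for \<gamma>
        proof -
          have "\<gamma> \<notin> ball a \<delta>" using d gfun by auto
          then have "\<gamma> \<le> a - d \<or> \<gamma> \<ge> a + d" using d0 by (auto simp: dist_real_def)
          then show ?thesis
          proof
            assume "\<gamma> \<le> a - d"
            then have "ell (a - d) a \<le> ell \<gamma> a" using pos gfun d0 by (intro ell_mono_low) auto
            then show ?thesis by (simp add: e_def min.coboundedI1)
          next
            assume "\<gamma> \<ge> a + d"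
            then have "ell (a + d) a \<le> ell \<gamma> a" using pos gfun d0 a by (intro ell_mono_high) auto
            then show ?thesis by (simp add: e_def min.coboundedI2)
          qed
        qed
        then show ?thesis using e0 by blast
      qed
    qed
    then obtain e where "e > 0" "\<forall>\<gamma>\<in>R. e \<le> ell \<gamma> a" by blast
    then have "e \<le> rate R a" by (intro rate_lower) auto
    with r0 \<open>e > 0\<close> show False by simp
  qed
qed

lemma analytic:
  fixes R :: "real set"
  assumes ne: "R \<noteq> {}" and cl: "closed R" and pos: "R \<subseteq> {0..}"
  defines "I \<equiv> rate R"
  shows "(\<forall>a. I a = 0 \<longleftrightarrow> a \<in> R) \<and>
    (\<forall>a. I a > 0 \<longrightarrow>
      (let P1 = (a < Inf R \<and> (\<forall>b \<le> Inf R. I b = ell (Inf R) b));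
           P2 = (bdd_above R \<and> a > Sup R \<and> (\<forall>b \<ge> Sup R. I b = ell (Sup R) b));
           P3 = (\<not> (a < Inf R) \<and> \<not> (bdd_above R \<and> a > Sup R) \<and>
                 (let cm = Sup (R \<inter> {..<a}); cp = Inf (R \<inter> {a<..})
                  in \<forall>b \<in> {cm..cp}. I b = min (ell cm b) (ell cp b)))
       in (P1 \<and> \<not> P2 \<and> \<not> P3) \<or> (\<not> P1 \<and> P2 \<and> \<not> P3) \<or> (\<not> P1 \<and> \<not> P2 \<and> P3)))"
proof (intro conjI allI impI)
  fix a show "I a = 0 \<longleftrightarrow> a \<in> R" unfolding I_def by (rule rate_zero_iff[OF ne cl pos])
next
  fix a assume Ia: "I a > 0"
  have aR: "a \<notin> R" using Ia rate_zero_iff[OF ne cl pos, of a] by (auto simp: I_def)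
  have bb: "bdd_below R" using pos by (auto simp: bdd_below_def)
  have IR: "Inf R \<in> R" using closed_contains_Inf[OF ne bb cl] .
  have Ige: "\<And>\<gamma>. \<gamma> \<in> R \<Longrightarrow> Inf R \<le> \<gamma>" using bb by (auto intro: cInf_lower)
  have SR: "bdd_above R \<Longrightarrow> Sup R \<in> R" using closed_contains_Sup[OF ne _ cl] by blast
  have Sle: "\<And>\<gamma>. bdd_above R \<Longrightarrow> \<gamma> \<in> R \<Longrightarrow> \<gamma> \<le> Sup R" by (auto intro: cSup_upper)
  define P1 where "P1 = (a < Inf R \<and> (\<forall>b \<le> Inf R. I b = ell (Inf R) b))"
  define P2 where "P2 = (bdd_above R \<and> a > Sup R \<and> (\<forall>b \<ge> Sup R. I b = ell (Sup R) b))"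
  define P3 where "P3 = (\<not> (a < Inf R) \<and> \<not> (bdd_above R \<and> a > Sup R) \<and>
                 (let cm = Sup (R \<inter> {..<a}); cp = Inf (R \<inter> {a<..})
                  in \<forall>b \<in> {cm..cp}. I b = min (ell cm b) (ell cp b)))"
  have "(P1 \<and> \<not> P2 \<and> \<not> P3) \<or> (\<not> P1 \<and> P2 \<and> \<not> P3) \<or> (\<not> P1 \<and> \<not> P2 \<and> P3)"
  proof (cases "a < Inf R")
    case True
    have P1: P1 unfolding P1_def
    proof (intro conjI allI impI True)
      fix b assume b: "b \<le> Inf R"
      show "I b = ell (Inf R) b" unfolding I_def
      proof (rule rate_attained[OF IR])
        fix \<gamma> assume gfun: "\<gamma> \<in> R"
        show "ell (Inf R) b \<le> ell \<gamma> b"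
        proof (cases "b < 0")
          case True then show ?thesis by (simp add: ell_neg)
        next
          case False then show ?thesis using b Ige[OF gfun] by (intro ell_mono_high) auto
        qed
      qed
    qed
    have "\<not> P2"
    proof
      assume P2
      then have "bdd_above R" "a > Sup R" by (auto simp: P2_def)
      then show False using True Sle[OF _ IR] by force
    qed
    moreover have "\<not> P3" using True by (simp add: P3_def)
    ultimately show ?thesis using P1 by blast
  next
    case False
    note F1 = False
    show ?thesis
    proof (cases "bdd_above R \<and> a > Sup R")
      case True
      have P2: P2 unfolding P2_def
      proof (intro conjI allI impI)
        show "bdd_above R" "a > Sup R" using True by auto
        fix b assume b: "b \<ge> Sup R"
        show "I b = ell (Sup R) b" unfolding I_def
        proof (rule rate_attained[OF SR])
          show "bdd_above R" using True by auto
          fix \<gamma> assume gfun: "\<gamma> \<in> R"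
          show "ell (Sup R) b \<le> ell \<gamma> b"
            using b Sle[OF _ gfun] True gfun pos by (intro ell_mono_low) auto
        qed
      qed
      have "\<not> P1" "\<not> P3" using F1 True by (auto simp: P1_def P3_def)
      then show ?thesis using P2 by blast
    next
      case False
      note F2 = False
      have aIR: "Inf R < a" using F1 IR aR by (cases "Inf R = a") auto
      have eq1: "R \<inter> {..<a} = R \<inter> {..a}" using aR by (auto simp: le_less)
      have eq2: "R \<inter> {a<..} = R \<inter> {a..}" using aR by (auto simp: le_less)
      define cm where "cm = Sup (R \<inter> {..<a})"
      define cp where "cp = Inf (R \<inter> {a<..})"
      have ne1: "R \<inter> {..a} \<noteq> {}" using IR aIR by auto
      have cmR: "cm \<in> R \<inter> {..a}" unfolding cm_def eq1
        by (rule closed_contains_Sup[OF ne1]) (auto intro: closed_Int cl)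
      have cmle: "\<And>\<gamma>. \<gamma> \<in> R \<Longrightarrow> \<gamma> < a \<Longrightarrow> \<gamma> \<le> cm"
        unfolding cm_def by (rule cSup_upper) auto
      have ne2: "R \<inter> {a..} \<noteq> {}"
      proof (cases "bdd_above R")
        case True
        then have "Sup R \<in> R" "a \<le> Sup R" using SR F2 by auto
        then show ?thesis by auto
      next
        case False
        then obtain x where "x \<in> R" "x > a" unfolding bdd_above_def by (meson not_le)
        then show ?thesis by auto
      qed
      have cpR: "cp \<in> R \<inter> {a..}" unfolding cp_def eq2
        by (rule closed_contains_Inf[OF ne2]) (auto intro: closed_Int cl)
      have cpge: "\<And>\<gamma>. \<gamma> \<in> R \<Longrightarrow> a < \<gamma> \<Longrightarrow> cp \<le> \<gamma>"
        unfolding cp_def by (rule cInf_lower) auto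
      have P3: P3 unfolding P3_def Let_def cm_def[symmetric] cp_def[symmetric]
      proof (intro conjI ballI)
        show "\<not> a < Inf R" "\<not> (bdd_above R \<and> Sup R < a)" using F1 F2 by auto
        fix b assume b: "b \<in> {cm..cp}"
        show "I b = min (ell cm b) (ell cp b)" unfolding I_def
        proof (rule rate_attained2)
          show "cm \<in> R" "cp \<in> R" using cmR cpR by auto
          fix \<gamma> assume gfun: "\<gamma> \<in> R"
          have "\<gamma> < a \<or> a < \<gamma>" using gfun aR by (cases "\<gamma> = a") auto
          then show "min (ell cm b) (ell cp b) \<le> ell \<gamma> b"
          proof
            assume "\<gamma> < a"
            then have "ell cm b \<le> ell \<gamma> b" using cmle[OF gfun] b gfun pos by (intro ell_mono_low) auto
            then show ?thesis by (simp add: min.coboundedI1)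
          next
            assume "a < \<gamma>"
            then have "ell cp b \<le> ell \<gamma> b" using cpge[OF gfun] b cmR pos by (intro ell_mono_high) auto
            then show ?thesis by (simp add: min.coboundedI2)
          qed
        qed
      qed
      have "\<not> P1" "\<not> P2" using F1 F2 by (auto simp: P1_def P2_def)
      then show ?thesis using P3 by blast
    qed
  qed
  then show "let P1 = (a < Inf R \<and> (\<forall>b \<le> Inf R. I b = ell (Inf R) b));
           P2 = (bdd_above R \<and> a > Sup R \<and> (\<forall>b \<ge> Sup R. I b = ell (Sup R) b));
           P3 = (\<not> (a < Inf R) \<and> \<not> (bdd_above R \<and> a > Sup R) \<and>
                 (let cm = Sup (R \<inter> {..<a}); cp = Inf (R \<inter> {a<..})
                  in \<forall>b \<in> {cm..cp}. I b = min (ell cm b) (ell cp b)))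
       in (P1 \<and> \<not> P2 \<and> \<not> P3) \<or> (\<not> P1 \<and> P2 \<and> \<not> P3) \<or> (\<not> P1 \<and> \<not> P2 \<and> P3)"
    unfolding P1_def P2_def P3_def by (simp only: Let_def)
qed



lemma hk_lint:
  fixes f :: "real \<Rightarrow> real"
  assumes fm: "f \<in> borel_measurable borel" and S: "S \<in> sets borel" and nn: "\<And>x. x \<in> S \<Longrightarrow> 0 \<le> f x"
  shows "integral S f = (LINT x:S|lborel. f x)"
proof (cases "set_integrable lborel S f")
  case True then show ?thesis using set_borel_integral_eq_integral(2) by metis
next
  case False
  have "\<not> f integrable_on S"
  proof
    assume "f integrable_on S"
    then have "f absolutely_integrable_on S" using nonnegative_absolutely_integrable_1 nn by blast
    then have "integrable lebesgue (\<lambda>x. indicator S x *\<^sub>R f x)" by (simp add: set_integrable_def)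
    moreover have "(\<lambda>x. indicator S x *\<^sub>R f x) \<in> borel_measurable lborel" using fm S by measurable
    ultimately have "integrable lborel (\<lambda>x. indicator S x *\<^sub>R f x)" using integrable_completion by blast
    with False show False by (simp add: set_integrable_def)
  qed
  then show ?thesis using False
    by (simp add: not_integrable_integral set_lebesgue_integral_def not_integrable_integral_eq set_integrable_def)
qed

lemma right_approx:
  fixes s :: real
  assumes s: "0 \<le> s"
  defines "d \<equiv> \<lambda>n::nat. (real (nat \<lfloor>real (Suc n) * s\<rfloor>) + 1) / real (Suc n)"
  shows "filterlim d (at_right s) sequentially"
proof -
  have fl: "real (nat \<lfloor>real (Suc n) * s\<rfloor>) = of_int \<lfloor>real (Suc n) * s\<rfloor>" for n
    using s by simp
  have lo: "s < d n" for n
  proof -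
    have "real (Suc n) * s < of_int \<lfloor>real (Suc n) * s\<rfloor> + 1" by linarith
    then show ?thesis unfolding d_def fl by (simp add: field_simps)
  qed
  have hi: "d n \<le> s + inverse (real (Suc n))" for n
  proof -
    have "of_int \<lfloor>real (Suc n) * s\<rfloor> + 1 \<le> real (Suc n) * s + 1" by linarith
    then have "(of_int \<lfloor>real (Suc n) * s\<rfloor> + 1) / real (Suc n) \<le> (real (Suc n) * s + 1) / real (Suc n)"
      by (intro divide_right_mono) auto
    also have "(real (Suc n) * s + 1) / real (Suc n) = s + inverse (real (Suc n))"
      by (simp add: field_simps del: of_nat_Suc)
    finally show ?thesis unfolding d_def fl .
  qed
  have "(\<lambda>n. s + inverse (real (Suc n))) \<longlonglongrightarrow> s + 0"
    by (intro tendsto_add tendsto_const LIMSEQ_inverse_real_of_nat)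
  moreover have e1: "eventually (\<lambda>n. s \<le> d n) sequentially"
    by (rule always_eventually) (use lo in \<open>auto intro: less_imp_le\<close>)
  moreover have e2: "eventually (\<lambda>n. d n \<le> s + inverse (real (Suc n))) sequentially"
    by (rule always_eventually) (use hi in auto)
  ultimately have "d \<longlonglongrightarrow> s"
    using tendsto_sandwich[OF e1 e2 tendsto_const] by simp
  moreover have "\<forall>n. d n \<in> {s<..} - {s}" using lo by (metis Diff_iff greaterThan_iff order_less_irrefl singletonD)
  then have "\<forall>\<^sub>F n in sequentially. d n \<in> {s<..} - {s}" by (simp add: always_eventually)
  ultimately show ?thesis unfolding filterlim_at by (simp only: Diff_iff singleton_iff)
qed

lemma Jm_measurable:
  fixes J :: "'w \<Rightarrow> real \<Rightarrow> 'e::metric_space"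
  assumes cp: "cadlag_process M J"
  shows "(\<lambda>p. J (fst p) (max 0 (snd p))) \<in> borel_measurable (M \<Otimes>\<^sub>M (lborel :: real measure))"
proof -
  define d where "d \<equiv> \<lambda>(n::nat) (s::real). (real (nat \<lfloor>real (Suc n) * max 0 s\<rfloor>) + 1) / real (Suc n)"
  have Jmeas: "\<And>s. 0 \<le> s \<Longrightarrow> (\<lambda>\<omega>. J \<omega> s) \<in> borel_measurable M" using cp by (simp add: cadlag_process_def)
  have mn: "(\<lambda>p. J (fst p) (d n (snd p))) \<in> borel_measurable (M \<Otimes>\<^sub>M lborel)" for n
  proof -
    have fk: "(\<lambda>p. J (fst p) ((real k + 1) / real (Suc n))) \<in> borel_measurable (M \<Otimes>\<^sub>M lborel)" for k :: nat
    proof -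
      have "0 \<le> (real k + 1) / real (Suc n)" by simp
      from measurable_compose[OF measurable_fst Jmeas[OF this]]
      show ?thesis by simp
    qed
    have h: "(\<lambda>p. real (Suc n) * max 0 (snd p)) \<in> borel_measurable (M \<Otimes>\<^sub>M lborel)" by measurable
    have "(\<lambda>p. \<lfloor>real (Suc n) * max 0 (snd p)\<rfloor>) \<in> M \<Otimes>\<^sub>M lborel \<rightarrow>\<^sub>M count_space UNIV"
      by (rule measurable_compose[OF h measurable_real_floor])
    then have g: "(\<lambda>p. nat \<lfloor>real (Suc n) * max 0 (snd p)\<rfloor>) \<in> M \<Otimes>\<^sub>M lborel \<rightarrow>\<^sub>M count_space UNIV"
      by (rule measurable_compose) (rule measurable_count_space)
    from measurable_compose_countable[where f="\<lambda>k p. J (fst p) ((real k + 1) / real (Suc n))", OF fk g] show ?thesis by (simp add: d_def)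
  qed
  show ?thesis
  proof (rule borel_measurable_LIMSEQ_metric[OF mn])
    fix p :: "_ \<times> real" assume p: "p \<in> space (M \<Otimes>\<^sub>M lborel)"
    then have \<omega>: "fst p \<in> space M" by (auto simp: space_pair_measure)
    then have cd: "cadlag (J (fst p))" using cp by (simp add: cadlag_process_def)
    define s where "s = max 0 (snd p)"
    have s0: "0 \<le> s" by (simp add: s_def)
    have "continuous (at_right s) (J (fst p))" using cd s0 by (simp add: cadlag_def)
    then have c: "(J (fst p) \<longlongrightarrow> J (fst p) s) (at_right s)" by (simp add: continuous_within)
    have "filterlim (\<lambda>n. d n (snd p)) (at_right s) sequentially"
      using right_approx[OF s0] by (simp add: d_def s_def)
    from filterlim_compose[OF c this]
    show "(\<lambda>n. J (fst p) (d n (snd p))) \<longlonglongrightarrow> J (fst p) (max 0 (snd p))" by (simp add: s_def)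
  qed
qed


lemma X_measurable:
  fixes M :: "'w measure" and J :: "'w \<Rightarrow> real \<Rightarrow> 'e::metric_space"
    and lam kap mu :: "'e \<Rightarrow> real" and t :: real
  assumes "continuous_on UNIV lam" and "continuous_on UNIV kap" and "continuous_on UNIV mu"
    and lam0: "\<And>x. lam x \<ge> 0" and "\<And>x. kap x \<ge> 0" and mu0: "\<And>x. mu x \<ge> 0"
    and "t \<ge> 0"
    and cp: "cadlag_process M J"
  shows "(\<lambda>\<omega>. phi lam kap mu t (J \<omega>)) \<in> borel_measurable M"
proof -
  have [measurable]: "lam \<in> borel_measurable borel" "kap \<in> borel_measurable borel" "mu \<in> borel_measurable borel"
    using assms by (auto intro: borel_measurable_continuous_onI)
  define F where "F = (\<lambda>\<omega> r. J \<omega> (max 0 r))"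
  have Fm[measurable]: "(\<lambda>(\<omega>, r). F \<omega> r) \<in> borel_measurable (M \<Otimes>\<^sub>M (lborel :: real measure))"
    using Jm_measurable[OF cp] by (simp add: F_def case_prod_beta')
  define H where "H = (\<lambda>\<omega> s. \<integral>r. indicator {s..t} r * mu (F \<omega> r) \<partial>lborel)"
  have Fm2: "(\<lambda>p. F (fst p) (snd p)) \<in> borel_measurable (M \<Otimes>\<^sub>M (lborel :: real measure))"
    using Fm by (simp add: case_prod_beta')
  have [measurable]: "(\<lambda>x. F (fst (fst x)) (snd x)) \<in> borel_measurable ((M \<Otimes>\<^sub>M (lborel :: real measure)) \<Otimes>\<^sub>M (lborel :: real measure))"
    using measurable_compose[OF _ Fm2, of "\<lambda>x. (fst (fst x), snd x)"] by simp
  have [measurable]: "Measurable.pred ((M \<Otimes>\<^sub>M (lborel :: real measure)) \<Otimes>\<^sub>M (lborel :: real measure)) (\<lambda>x. snd x \<in> {snd (fst x)..t})"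
    by (simp only: atLeastAtMost_iff) measurable
  have Hm[measurable]: "(\<lambda>(\<omega>, s). H \<omega> s) \<in> borel_measurable (M \<Otimes>\<^sub>M (lborel :: real measure))"
    unfolding H_def case_prod_beta' by measurable
  define G where "G = (\<lambda>\<omega> s. lam (F \<omega> s) * exp (- kap (F \<omega> s) * H \<omega> s))"
  have Gm: "(\<lambda>(\<omega>, s). G \<omega> s) \<in> borel_measurable (M \<Otimes>\<^sub>M (lborel :: real measure))"
    unfolding G_def case_prod_beta' by measurable
  define X where "X = (\<lambda>\<omega>. \<integral>s. indicator {0..t} s * G \<omega> s \<partial>lborel)"
  have Xm: "X \<in> borel_measurable M"
    using Gm unfolding X_def case_prod_beta' by measurable
  have eq: "phi lam kap mu t (J \<omega>) = X \<omega>" if \<omega>: "\<omega> \<in> space M" for \<omega>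
  proof -
    have sec: "f \<in> borel_measurable (M \<Otimes>\<^sub>M lborel) \<Longrightarrow> (\<lambda>y. f (\<omega>, y)) \<in> borel_measurable lborel"
      for f :: "_ \<Rightarrow> real"
      using measurable_Pair2[OF _ \<omega>] by blast
    have mF: "(\<lambda>r. mu (F \<omega> r)) \<in> borel_measurable borel"
      using sec[of "\<lambda>p. mu (F (fst p) (snd p))"] by (simp add: measurable_lborel1)
    have Hs: "integral {s..t} (\<lambda>r. mu (J \<omega> r)) = H \<omega> s" if s: "0 \<le> s" for s
    proof -
      have "integral {s..t} (\<lambda>r. mu (J \<omega> r)) = integral {s..t} (\<lambda>r. mu (F \<omega> r))"
        using s by (intro integral_cong) (auto simp: F_def max_def)
      also have "\<dots> = (LINT r:{s..t}|lborel. mu (F \<omega> r))"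
        by (rule hk_lint[OF mF]) (auto intro: mu0)
      also have "\<dots> = H \<omega> s" by (simp add: H_def set_lebesgue_integral_def)
      finally show ?thesis .
    qed
    have mG: "(\<lambda>s. G \<omega> s) \<in> borel_measurable borel"
      using sec[of "\<lambda>p. G (fst p) (snd p)"] Gm by (simp add: measurable_lborel1 case_prod_beta')
    have "phi lam kap mu t (J \<omega>) = integral {0..t} (\<lambda>s. G \<omega> s)"
      unfolding phi_def G_def by (intro integral_cong) (auto simp: Hs F_def max_def)
    also have "\<dots> = (LINT s:{0..t}|lborel. G \<omega> s)"
      by (rule hk_lint[OF mG]) (auto simp: G_def intro!: mult_nonneg_nonneg lam0 less_imp_le[OF exp_gt_zero])
    also have "\<dots> = X \<omega>" by (simp add: X_def set_lebesgue_integral_def)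
    finally show ?thesis .
  qed
  show ?thesis using Xm measurable_cong[of M "\<lambda>\<omega>. phi lam kap mu t (J \<omega>)" X] eq by blast
qed



theorem proposition1:
  fixes M :: "'w measure" and J :: "'w \<Rightarrow> real \<Rightarrow> 'e::metric_space"
    and lam kap mu :: "'e \<Rightarrow> real" and t :: real
  assumes "prob_space M"
    and "continuous_on UNIV lam" and "continuous_on UNIV kap" and "continuous_on UNIV mu"
    and "\<And>x. lam x \<ge> 0" and "\<And>x. kap x \<ge> 0" and "\<And>x. mu x \<ge> 0"
    and "t \<ge> 0"
    and "cadlag_process M J"
  defines "R \<equiv> attainable M lam kap mu t (\<lambda>n. J)"
  defines "I \<equiv> rate R"
  shows "(\<forall>a. I a = 0 \<longleftrightarrow> a \<in> R) \<and>
    (\<forall>a. I a > 0 \<longrightarrow>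
      (let P1 = (a < Inf R \<and> (\<forall>b \<le> Inf R. I b = ell (Inf R) b));
           P2 = (bdd_above R \<and> a > Sup R \<and> (\<forall>b \<ge> Sup R. I b = ell (Sup R) b));
           P3 = (\<not> (a < Inf R) \<and> \<not> (bdd_above R \<and> a > Sup R) \<and>
                 (let cm = Sup (R \<inter> {..<a}); cp = Inf (R \<inter> {a<..})
                  in \<forall>b \<in> {cm..cp}. I b = min (ell cm b) (ell cp b)))
       in (P1 \<and> \<not> P2 \<and> \<not> P3) \<or> (\<not> P1 \<and> P2 \<and> \<not> P3) \<or> (\<not> P1 \<and> \<not> P2 \<and> P3)))"
proof -
  interpret P: prob_space M by fact
  define X where "X = (\<lambda>\<omega>. phi lam kap mu t (J \<omega>))"
  have Xm[measurable]: "X \<in> borel_measurable M"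
    unfolding X_def by (rule X_measurable[OF assms(2-9)])
  have X0: "0 \<le> X \<omega>" for \<omega>
  proof -
    let ?f = "\<lambda>s. lam (J \<omega> s) * exp (- kap (J \<omega> s) * integral {s..t} (\<lambda>r. mu (J \<omega> r)))"
    show ?thesis
    proof (cases "?f integrable_on {0..t}")
      case True
      then show ?thesis unfolding X_def phi_def
        by (rule integral_nonneg) (auto intro!: mult_nonneg_nonneg assms(5) less_imp_le[OF exp_gt_zero])
    next
      case False then show ?thesis by (simp add: X_def phi_def not_integrable_integral)
    qed
  qed
  define m where "m = (\<lambda>A. measure M {\<omega> \<in> space M. X \<omega> \<in> A})"
  have e: "\<And>P. (\<exists>N::nat. \<forall>n\<ge>N. P) = P" by auto
  have Rdef: "R = {\<gamma>. 0 \<le> \<gamma> \<and> (\<forall>\<epsilon>>0. 0 < m {\<gamma> - \<epsilon><..<\<gamma> + \<epsilon>})}"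
    unfolding R_def attainable_def m_def X_def e by (rule refl)
  have pos: "R \<subseteq> {0..}" unfolding Rdef by auto
  have sets: "{\<omega> \<in> space M. X \<omega> \<in> A} \<in> sets M" if "A \<in> sets borel" for A
    using that by measurable
  have cl: "closed R"
  proof -
    have "closure R \<subseteq> R"
    proof
      fix \<gamma> assume g: "\<gamma> \<in> closure R"
      have "closure R \<subseteq> {0..}" using pos by (intro closure_minimal) auto
      then have g0: "0 \<le> \<gamma>" using g by auto
      have "0 < m {\<gamma> - \<epsilon><..<\<gamma> + \<epsilon>}" if e: "\<epsilon> > 0" for \<epsilon>
      proof -
        obtain y where y: "y \<in> R" "dist y \<gamma> < \<epsilon>/2" using g e closure_approachable[of \<gamma> R]
          by (metis half_gt_zero)
        have "\<bar>y - \<gamma>\<bar> < \<epsilon>/2" using y(2) by (simp add: dist_real_def)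
        then have yg: "\<gamma> - \<epsilon>/2 < y" "y < \<gamma> + \<epsilon>/2" by (auto simp: abs_less_iff simp del: less_divide_eq_numeral1)
        have "0 < m {y - \<epsilon>/2<..<y + \<epsilon>/2}" using y e unfolding Rdef by auto
        also have "\<dots> \<le> m {\<gamma> - \<epsilon><..<\<gamma> + \<epsilon>}" unfolding m_def
          using yg by (intro P.finite_measure_mono sets) auto
        finally show ?thesis .
      qed
      then show "\<gamma> \<in> R" using g0 unfolding Rdef by auto
    qed
    then show ?thesis using closure_subset_eq by blast
  qed
  define F where "F = (\<lambda>x. m {..x})"
  have Fmono: "x \<le> y \<Longrightarrow> F x \<le> F y" for x y
    unfolding F_def m_def by (intro P.finite_measure_mono sets) auto
  have Fneg: "x < 0 \<Longrightarrow> F x = 0" for x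
  proof -
    assume "x < 0"
    then have e: "{\<omega> \<in> space M. X \<omega> \<in> {..x}} = {}" using X0 by (auto simp: not_le intro: less_le_trans)
    show ?thesis unfolding F_def m_def by (simp only: e measure_empty)
  qed
  define S where "S = {x. 0 < F x}"
  have Sne: "S \<noteq> {}"
  proof
    assume Se: "S = {}"
    define A where "A = (\<lambda>n::nat. {\<omega> \<in> space M. X \<omega> \<in> {..real n}})"
    have rA: "range A \<subseteq> sets M" unfolding A_def by (auto intro!: sets)
    have iA: "incseq A"
    proof (rule incseq_SucI)
      fix n show "A n \<subseteq> A (Suc n)" unfolding A_def by auto
    qed
    have "(\<lambda>n. measure M (A n)) \<longlonglongrightarrow> measure M (\<Union>n. A n)"
      by (rule P.finite_Lim_measure_incseq[OF rA iA])
    moreover have "(\<Union>n. A n) = space M"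
    proof -
      have "\<omega> \<in> (\<Union>n. A n)" if w: "\<omega> \<in> space M" for \<omega>
      proof -
        obtain n where "X \<omega> \<le> real n" using real_arch_simple by blast
        then show ?thesis using w by (auto simp: A_def)
      qed
      then show ?thesis by (auto simp: A_def)
    qed
    moreover have "measure M (A n) = 0" for n
    proof -
      have "\<not> 0 < F (real n)" using Se unfolding S_def by auto
      moreover have "0 \<le> F (real n)" by (simp add: F_def m_def)
      ultimately show ?thesis unfolding F_def m_def A_def by linarith
    qed
    ultimately have "(\<lambda>n. 0::real) \<longlonglongrightarrow> 1" by (simp add: P.prob_space)
    from LIMSEQ_unique[OF tendsto_const this] show False by simp
  qed
  have Sge: "0 \<le> x" if xS: "x \<in> S" for x
  proof (rule ccontr)
    assume "\<not> 0 \<le> x"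
    then have "F x = 0" using Fneg by simp
    then show False using xS unfolding S_def by simp
  qed
  have bS: "bdd_below S" unfolding bdd_below_def using Sge by blast
  define c where "c = Inf S"
  have c0: "0 \<le> c" unfolding c_def using Sne Sge by (intro cInf_greatest) auto
  have cR: "c \<in> R"
  proof -
    have "0 < m {c - \<epsilon><..<c + \<epsilon>}" if e: "\<epsilon> > 0" for \<epsilon>
    proof -
      have "c < c + \<epsilon>/2" using e by simp
      then obtain x where x: "x \<in> S" "x < c + \<epsilon>/2" unfolding c_def using cInf_less_iff[OF Sne bS] by blast
      have F1: "0 < F (c + \<epsilon>/2)" using x Fmono[of x "c + \<epsilon>/2"] unfolding S_def by auto
      have F2: "F (c - \<epsilon>) = 0"
      proof (rule ccontr)
        assume "F (c - \<epsilon>) \<noteq> 0"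
        moreover have "0 \<le> F (c - \<epsilon>)" by (simp add: F_def m_def)
        ultimately have "c - \<epsilon> \<in> S" unfolding S_def by auto
        then have "c \<le> c - \<epsilon>" unfolding c_def using bS by (rule cInf_lower)
        then show False using e by simp
      qed
      have sub: "{\<omega> \<in> space M. X \<omega> \<in> {..c + \<epsilon>/2}} \<subseteq>
        {\<omega> \<in> space M. X \<omega> \<in> {..c - \<epsilon>}} \<union> {\<omega> \<in> space M. X \<omega> \<in> {c - \<epsilon><..<c + \<epsilon>}}"
        using e by auto
      have "F (c + \<epsilon>/2) \<le> measure M ({\<omega> \<in> space M. X \<omega> \<in> {..c - \<epsilon>}} \<union> {\<omega> \<in> space M. X \<omega> \<in> {c - \<epsilon><..<c + \<epsilon>}})"
        unfolding F_def m_def using sub by (intro P.finite_measure_mono sets) (auto intro!: sets.Un sets)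
      also have "\<dots> \<le> F (c - \<epsilon>) + m {c - \<epsilon><..<c + \<epsilon>}"
        unfolding F_def m_def by (intro measure_subadditive sets) (auto simp: P.emeasure_finite)
      finally show ?thesis using F1 F2 by simp
    qed
    then show ?thesis using c0 unfolding Rdef by auto
  qed
  have ne: "R \<noteq> {}" using cR by auto
  show ?thesis unfolding I_def by (rule analytic[OF ne cl pos])
qed

end
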